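(* Let $\Lambda$ be a full-rank lattice in $\mathbb{R}^n$ and let $\Lambda_1\subseteq\Lambda$ be an arbitrary full-rank sublattice. Assume $B_1 > 2\nu(\Lambda_1)$. Let $\lambda$ be uniformly distributed on $\Lambda\cap[0,B_1)^n$. Then the total variation distance between the uniform distribution on $\Lambda/\Lambda_1$ and the distribution of $\lambda+\Lambda_1\in\Lambda/\Lambda_1$ is at most \[ 1 - \frac{(B_1-2\nu(\Lambda_1))^n}{(B_1+2\nu(\Lambda))^n}. \]
   Context: For a full-rank lattice $L$, $\nu(L)=\sup_{x\in\mathbb{R}^n}\min_{\lambda\in L}\|x-\lambda\|_2$ is its covering radius. The total variation distance between distributions $P,Q$ on a finite set $S$ is $\tfrac12\sum_{s\in S}|P(s)-Q(s)|$. *)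

theory Defs
  imports "HOL-Analysis.Analysis"
begin

definition full_rank_lattice :: "(real^'n) set \<Rightarrow> bool" where
  "full_rank_lattice L \<longleftrightarrow>
     (\<exists>b :: 'n \<Rightarrow> real^'n. inj b \<and> independent (range b) \<and>
        L = {x. \<exists>c :: 'n \<Rightarrow> int. x = (\<Sum>i\<in>UNIV. of_int (c i) *\<^sub>R b i)})"

definition covering_radius :: "(real^'n) set \<Rightarrow> real" where
  "covering_radius L = (SUP x. (INF l\<in>L. dist x l))"

definition lattice_cosets :: "(real^'n) set \<Rightarrow> (real^'n) set \<Rightarrow> (real^'n) set set" where
  "lattice_cosets L L1 = (\<lambda>l. (\<lambda>m. l + m) ` L1) ` L"

definition box_points :: "(real^'n) set \<Rightarrow> real \<Rightarrow> (real^'n) set" where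
  "box_points L B = {x \<in> L. \<forall>i. 0 \<le> x $ i \<and> x $ i < B}"

text \<open>Total variation distance between the uniform distribution on L/L1 and the law of
  lambda + L1, where lambda is uniform on box_points L B.\<close>
definition coset_tv :: "(real^'n) set \<Rightarrow> (real^'n) set \<Rightarrow> real \<Rightarrow> real" where
  "coset_tv L L1 B =
     (1/2) * (\<Sum>C\<in>lattice_cosets L L1.
        \<bar>real (card (box_points L B \<inter> C)) / real (card (box_points L B))
          - 1 / real (card (lattice_cosets L L1))\<bar>)"

end

theory Submission
  imports Defs "HOL-Real_Asymp.Real_Asymp"
begin


lemma frl_param:
  assumes "full_rank_lattice (L :: (real^'n) set)"
  obtains g :: "real^'n \<Rightarrow> real^'n" where "linear g" "inj g"
    "L = range (\<lambda>c::'n\<Rightarrow>int. g (\<chi> i. of_int (c i)))"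
proof -
  obtain b :: "'n \<Rightarrow> real^'n" where b: "inj b" "independent (range b)"
    "L = {x. \<exists>c :: 'n \<Rightarrow> int. x = (\<Sum>i\<in>UNIV. of_int (c i) *\<^sub>R b i)}"
    using assms unfolding full_rank_lattice_def by blast
  define g where "g y = (\<Sum>i\<in>UNIV. (y$i) *\<^sub>R b i)" for y :: "real^'n"
  have lin: "linear g"
    by (rule linearI) (simp_all add: g_def scaleR_add_left sum.distrib scaleR_sum_right)
  have "inj g"
  proof (subst linear_injective_0[OF lin], intro allI impI)
    fix y assume y0: "g y = 0"
    show "y = 0"
    proof (rule ccontr)
      assume "y \<noteq> 0"
      then obtain j where j: "y$j \<noteq> 0" by (metis vec_eq_iff zero_index)
      define u where "u v = y $ (inv b v)" for v
      have "(\<Sum>v\<in>range b. u v *\<^sub>R v) = (\<Sum>i\<in>UNIV. u (b i) *\<^sub>R b i)"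
        using b(1) by (simp add: sum.reindex)
      also have "\<dots> = g y" using b(1) by (simp add: u_def g_def)
      finally have "(\<Sum>v\<in>range b. u v *\<^sub>R v) = 0" using y0 by simp
      moreover have "u (b j) \<noteq> 0" using b(1) j by (simp add: u_def)
      ultimately have "dependent (range b)"
        by (subst dependent_finite) auto
      with b(2) show False by simp
    qed
  qed
  moreover have "L = range (\<lambda>c::'n\<Rightarrow>int. g (\<chi> i. of_int (c i)))"
    unfolding b(3) g_def by auto
  ultimately show ?thesis using that lin by blast
qed

lemma frl_zero: assumes "full_rank_lattice (L :: (real^'n) set)" shows "0 \<in> L"
proof -
  obtain g :: "real^'n \<Rightarrow> real^'n" where g: "linear g" "L = range (\<lambda>c::'n\<Rightarrow>int. g (\<chi> i. of_int (c i)))"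
    using frl_param[OF assms] by metis
  have "g (\<chi> i. of_int ((\<lambda>_. 0) i)) = 0" proof -
    have "(\<chi> i. of_int ((\<lambda>_. 0::int) i)) = (0::real^'n)" by (simp add: vec_eq_iff)
    then show ?thesis using g(1) by (simp add: linear_0)
  qed
  then show ?thesis unfolding g(2) by (intro image_eqI[where x="\<lambda>_. 0"]) auto
qed

lemma frl_add: assumes "full_rank_lattice (L :: (real^'n) set)" "x \<in> L" "y \<in> L" shows "x + y \<in> L"
proof -
  obtain g :: "real^'n \<Rightarrow> real^'n" where g: "linear g" "L = range (\<lambda>c::'n\<Rightarrow>int. g (\<chi> i. of_int (c i)))"
    using frl_param[OF assms(1)] by metis
  obtain c d where "x = g (\<chi> i. of_int (c i))" "y = g (\<chi> i. of_int (d i))" using assms g by auto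
  moreover have "(\<chi> i. of_int ((\<lambda>i. c i + d i) i)) = (\<chi> i. of_int (c i)) + (\<chi> i. (of_int (d i)::real))"
    by (simp add: vec_eq_iff)
  ultimately have "x + y = g (\<chi> i. of_int ((\<lambda>i. c i + d i) i))"
    using linear_add[OF g(1)] by metis
  then show ?thesis unfolding g(2) by (intro image_eqI[where x="\<lambda>i. c i + d i"]) auto
qed

lemma frl_neg: assumes "full_rank_lattice (L :: (real^'n) set)" "x \<in> L" shows "- x \<in> L"
proof -
  obtain g :: "real^'n \<Rightarrow> real^'n" where g: "linear g" "L = range (\<lambda>c::'n\<Rightarrow>int. g (\<chi> i. of_int (c i)))"
    using frl_param[OF assms(1)] by metis
  obtain c where "x = g (\<chi> i. of_int (c i))" using assms g by auto
  moreover have "(\<chi> i. of_int ((\<lambda>i. - c i) i)) = - (\<chi> i. (of_int (c i)::real))"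
    by (simp add: vec_eq_iff)
  ultimately have "- x = g (\<chi> i. of_int ((\<lambda>i. - c i) i))"
    using linear_neg[OF g(1)] by metis
  then show ?thesis unfolding g(2) by (intro image_eqI[where x="\<lambda>i. - c i"]) auto
qed

lemma frl_diff: assumes "full_rank_lattice (L :: (real^'n) set)" "x \<in> L" "y \<in> L" shows "x - y \<in> L"
  using frl_add[OF assms(1,2) frl_neg[OF assms(1,3)]] by simp

lemma frl_finite:
  assumes "full_rank_lattice (L :: (real^'n) set)"
  shows "finite (L \<inter> cball 0 r)"
proof -
  obtain g :: "real^'n \<Rightarrow> real^'n" where g: "linear g" "inj g" "L = range (\<lambda>c::'n\<Rightarrow>int. g (\<chi> i. of_int (c i)))"
    using frl_param[OF assms] by metis
  obtain K where K: "K > 0" "\<And>x. K * norm x \<le> norm (g x)"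
    using linear_inj_bounded_below_pos[OF g(1,2)] by metis
  define M where "M = ceiling (r / K)"
  have fin: "finite (PiE UNIV (\<lambda>_::'n. {-M..M}))" by (rule finite_PiE) auto
  have "L \<inter> cball 0 r \<subseteq> (\<lambda>c::'n\<Rightarrow>int. g (\<chi> i. of_int (c i))) ` (PiE UNIV (\<lambda>_::'n. {-M..M}))"
  proof
    fix x assume x: "x \<in> L \<inter> cball 0 r"
    then obtain c where c: "x = g (\<chi> i. of_int (c i))" using g(3) by auto
    have "\<bar>real_of_int (c i)\<bar> \<le> r / K" for i
    proof -
      have "\<bar>real_of_int (c i)\<bar> = \<bar>(\<chi> i. real_of_int (c i)) $ i\<bar>" by simp
      also have "\<dots> \<le> norm (\<chi> i. real_of_int (c i))" by (rule component_le_norm_cart)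
      also have "\<dots> \<le> r / K"
        using K(2)[of "\<chi> i. real_of_int (c i)"] x c K(1) by (simp add: field_simps)
      finally show ?thesis .
    qed
    have "c i \<in> {-M..M}" for i
    proof -
      have a: "real_of_int (c i) \<le> r/K" "- real_of_int (c i) \<le> r/K" using \<open>\<And>i. \<bar>real_of_int (c i)\<bar> \<le> r / K\<close>[of i] by linarith+
      have "r/K \<le> real_of_int M" unfolding M_def by (rule le_of_int_ceiling)
      then have "real_of_int (c i) \<le> real_of_int M" "real_of_int (- c i) \<le> real_of_int M" using a by linarith+
      then show ?thesis unfolding of_int_le_iff by simp
    qed
    then show "x \<in> (\<lambda>c::'n\<Rightarrow>int. g (\<chi> i. of_int (c i))) ` (PiE UNIV (\<lambda>_::'n. {-M..M}))"
      using c by (auto simp: PiE_UNIV_domain)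
  qed
  then show ?thesis using fin finite_subset by blast
qed

lemma frl_covering:
  assumes "full_rank_lattice (L :: (real^'n) set)"
  shows "\<exists>R. \<forall>x. \<exists>l\<in>L. dist x l \<le> R"
proof -
  obtain g :: "real^'n \<Rightarrow> real^'n" where g: "linear g" "inj g" "L = range (\<lambda>c::'n\<Rightarrow>int. g (\<chi> i. of_int (c i)))"
    using frl_param[OF assms] by metis
  obtain K where K: "\<And>x. norm (g x) \<le> K * norm x" using linear_bounded[OF g(1)] by metis
  have sg: "surj g" using eucl.linear_inj_imp_surj[OF g(1,2)] .
  show ?thesis
  proof (intro exI allI)
    fix x
    obtain y where y: "x = g y" using sg by (metis surjD)
    define l where "l = g (\<chi> i. of_int (floor (y$i)))"
    have lL: "l \<in> L" unfolding l_def g(3) by (intro image_eqI[where x="\<lambda>i. floor (y$i)"]) auto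
    have "dist x l = norm (g (y - (\<chi> i. of_int (floor (y$i)))))"
      using g(1) by (simp add: y l_def dist_norm linear_diff)
    also have "\<dots> \<le> K * norm (y - (\<chi> i. of_int (floor (y$i))))" by (rule K)
    also have "\<dots> \<le> \<bar>K\<bar> * CARD('n)"
    proof -
      have "norm (y - (\<chi> i. of_int (floor (y$i)))) \<le> (\<Sum>i\<in>UNIV. \<bar>(y - (\<chi> i. of_int (floor (y$i)))) $ i\<bar>)"
        by (rule norm_le_l1_cart)
      also have "\<dots> \<le> (\<Sum>i\<in>(UNIV::'n set). 1)"
        by (intro sum_mono) (simp, linarith)
      finally have "norm (y - (\<chi> i. of_int (floor (y$i)))) \<le> CARD('n)" by simp
      then show ?thesis
        by (meson abs_ge_self abs_ge_zero mult_mono norm_ge_zero order_trans)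
    qed
    finally show "\<exists>l\<in>L. dist x l \<le> \<bar>K\<bar> * real CARD('n)" using lL by blast
  qed
qed

lemma frl_nearest:
  assumes "full_rank_lattice (L :: (real^'n) set)"
  shows "\<exists>l0\<in>L. \<forall>l\<in>L. dist x l0 \<le> dist x l"
proof -
  obtain R where R: "\<And>x. \<exists>l\<in>L. dist x l \<le> R" using frl_covering[OF assms] by metis
  obtain l1 where l1: "l1 \<in> L" "dist x l1 \<le> R" using R by blast
  define S where "S = L \<inter> cball x R"
  have "S \<subseteq> L \<inter> cball 0 (norm x + R)" unfolding S_def
    by (auto simp: dist_norm) (metis norm_minus_commute norm_triangle_sub order_trans add_mono order_refl)
  then have fS: "finite S" using frl_finite[OF assms] finite_subset by blast
  have nS: "S \<noteq> {}" using l1 by (auto simp: S_def)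
  define l0 where "l0 = arg_min_on (dist x) S"
  have l0S: "l0 \<in> S" using arg_min_if_finite(1)[OF fS nS] by (simp add: l0_def)
  have min: "\<not> (\<exists>l\<in>S. dist x l < dist x l0)" using arg_min_if_finite(2)[OF fS nS] by (simp add: l0_def)
  have "\<forall>l\<in>L. dist x l0 \<le> dist x l"
  proof
    fix l assume "l \<in> L"
    show "dist x l0 \<le> dist x l"
    proof (cases "l \<in> S")
      case True then show ?thesis using min by force
    next
      case False
      then have "dist x l > R" using \<open>l \<in> L\<close> by (auto simp: S_def)
      moreover have "dist x l0 \<le> R" using l0S by (auto simp: S_def)
      ultimately show ?thesis by simp
    qed
  qed
  then show ?thesis using l0S S_def by blast
qed

lemma frl_cr:
  assumes "full_rank_lattice (L :: (real^'n) set)"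
  shows "covering_radius L \<ge> 0"
    and "\<exists>l0\<in>L. dist x l0 \<le> covering_radius L \<and> (\<forall>l\<in>L. dist x l0 \<le> dist x l)"
proof -
  have L0: "L \<noteq> {}" using frl_zero[OF assms] by blast
  obtain R where R: "\<And>x. \<exists>l\<in>L. dist x l \<le> R" using frl_covering[OF assms] by metis
  have bb: "bdd_below ((dist y) ` L)" for y by (rule bdd_belowI[of _ 0]) auto
  have rho: "(INF l\<in>L. dist y l) \<le> R" for y
    using R[of y] by (meson bb cINF_lower order_trans)
  have rho0: "(INF l\<in>L. dist y l) \<ge> 0" for y
    using L0 by (intro cINF_greatest) auto
  have ba: "bdd_above (range (\<lambda>y. INF l\<in>L. dist y l))" using rho by (intro bdd_aboveI) auto
  have up: "(INF l\<in>L. dist y l) \<le> covering_radius L" for y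
    unfolding covering_radius_def by (rule cSUP_upper[OF _ ba]) simp
  show "covering_radius L \<ge> 0" using up[of 0] rho0[of 0] by linarith
  obtain l0 where l0: "l0 \<in> L" "\<forall>l\<in>L. dist x l0 \<le> dist x l" using frl_nearest[OF assms] by blast
  have "(INF l\<in>L. dist x l) = dist x l0"
    using l0 L0 by (intro antisym cINF_lower bb cINF_greatest) auto
  then show "\<exists>l0\<in>L. dist x l0 \<le> covering_radius L \<and> (\<forall>l\<in>L. dist x l0 \<le> dist x l)"
    using l0 up[of x] by auto
qed



definition vor :: "(real^'n) set \<Rightarrow> (real^'n) set" where
  "vor L = {x. \<forall>l\<in>L. norm x \<le> dist x l}"
definition ovor :: "(real^'n) set \<Rightarrow> (real^'n) set" where
  "ovor L = {x. \<forall>l\<in>L. l \<noteq> 0 \<longrightarrow> norm x < dist x l}"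

lemma vor_bound:
  assumes "full_rank_lattice (L :: (real^'n) set)" "x \<in> vor L"
  shows "norm x \<le> covering_radius L"
proof -
  obtain l0 where "l0 \<in> L" "dist x l0 \<le> covering_radius L" using frl_cr(2)[OF assms(1)] by blast
  then show ?thesis using assms(2) unfolding vor_def by force
qed

lemma vor_compact:
  assumes "full_rank_lattice (L :: (real^'n) set)"
  shows "compact (vor L)"
proof -
  have "closed (vor L)"
  proof -
    have "vor L = (\<Inter>l\<in>L. {x. norm x \<le> dist x l})" unfolding vor_def by auto
    moreover have "closed {x::real^'n. norm x \<le> dist x l}" for l
      by (intro closed_Collect_le continuous_intros)
    ultimately show ?thesis by auto
  qed
  moreover have "bounded (vor L)"
    using vor_bound[OF assms] by (intro boundedI) blast
  ultimately show ?thesis by (simp add: compact_eq_bounded_closed)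
qed

lemma vor_lmeasurable:
  assumes "full_rank_lattice (L :: (real^'n) set)"
  shows "vor L \<in> lmeasurable"
  using lmeasurable_compact[OF vor_compact[OF assms]] .

lemma ovor_eq:
  assumes "full_rank_lattice (L :: (real^'n) set)"
  shows "ovor L = vor L - (\<Union>l\<in>(L \<inter> cball 0 (2 * covering_radius L)) - {0}. {x. (2 *\<^sub>R l) \<bullet> x = l \<bullet> l})"
proof -
  have hyp: "norm x = dist x l \<longleftrightarrow> (2 *\<^sub>R l) \<bullet> x = l \<bullet> l" for x l :: "real^'n"
  proof -
    have "norm x = dist x l \<longleftrightarrow> x \<bullet> x = (x - l) \<bullet> (x - l)"
      unfolding dist_norm by (rule norm_eq)
    also have "\<dots> \<longleftrightarrow> (2 *\<^sub>R l) \<bullet> x = l \<bullet> l"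
      by (simp add: inner_diff_left inner_diff_right inner_commute algebra_simps)
    finally show ?thesis .
  qed
  have z: "0 \<in> L" using frl_zero[OF assms] .
  show ?thesis
  proof (intro set_eqI iffI)
    fix x assume x: "x \<in> ovor L"
    have xv: "x \<in> vor L" unfolding vor_def
    proof (intro CollectI ballI)
      fix l assume "l \<in> L"
      show "norm x \<le> dist x l" using x \<open>l \<in> L\<close> unfolding ovor_def by (cases "l = 0") auto
    qed
    moreover have "(2 *\<^sub>R l) \<bullet> x \<noteq> l \<bullet> l" if "l \<in> L" "l \<noteq> 0" for l
      using x that hyp[of x l] unfolding ovor_def by auto
    ultimately show "x \<in> vor L - (\<Union>l\<in>(L \<inter> cball 0 (2 * covering_radius L)) - {0}. {x. (2 *\<^sub>R l) \<bullet> x = l \<bullet> l})"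
      by auto
  next
    fix x assume x: "x \<in> vor L - (\<Union>l\<in>(L \<inter> cball 0 (2 * covering_radius L)) - {0}. {x. (2 *\<^sub>R l) \<bullet> x = l \<bullet> l})"
    have nx: "norm x \<le> covering_radius L" using vor_bound[OF assms] x by blast
    show "x \<in> ovor L" unfolding ovor_def
    proof (intro CollectI ballI impI)
      fix l assume l: "l \<in> L" "l \<noteq> 0"
      have le: "norm x \<le> dist x l" using x l unfolding vor_def by auto
      show "norm x < dist x l"
      proof (rule ccontr)
        assume "\<not> norm x < dist x l"
        then have eq: "norm x = dist x l" using le by simp
        have "norm l \<le> norm x + dist x l"
          using norm_triangle_sub[of l x] by (simp add: dist_norm norm_minus_commute)
        then have "norm l \<le> 2 * covering_radius L" using eq nx by simp
        then show False using x l eq hyp[of x l] by auto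
      qed
    qed
  qed
qed

lemma ovor_props:
  assumes "full_rank_lattice (L :: (real^'n) set)"
  shows "ovor L \<in> lmeasurable" "measure lebesgue (ovor L) = measure lebesgue (vor L)"
proof -
  define H where "H = (\<Union>l\<in>(L \<inter> cball 0 (2 * covering_radius L)) - {0}. {x::real^'n. (2 *\<^sub>R l) \<bullet> x = l \<bullet> l})"
  have "negligible H" unfolding H_def
  proof (rule negligible_Union)
    show "finite ((\<lambda>l. {x::real^'n. (2 *\<^sub>R l) \<bullet> x = l \<bullet> l}) ` (L \<inter> cball 0 (2 * covering_radius L) - {0}))"
      using frl_finite[OF assms] by auto
  next
    fix T assume "T \<in> (\<lambda>l. {x::real^'n. (2 *\<^sub>R l) \<bullet> x = l \<bullet> l}) ` (L \<inter> cball 0 (2 * covering_radius L) - {0})"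
    then obtain l where "l \<noteq> 0" "T = {x::real^'n. (2 *\<^sub>R l) \<bullet> x = l \<bullet> l}" by auto
    then show "negligible T" using negligible_hyperplane[of "2 *\<^sub>R l" "l \<bullet> l"] by simp
  qed
  then have Hn: "H \<in> null_sets lebesgue" by (simp add: negligible_iff_null_sets)
  have eq: "ovor L = vor L - H" unfolding H_def by (rule ovor_eq[OF assms])
  show "ovor L \<in> lmeasurable" unfolding eq
    using vor_lmeasurable[OF assms] Hn by (intro fmeasurable.Diff) (auto simp: fmeasurableI_null_sets)
  show "measure lebesgue (ovor L) = measure lebesgue (vor L)" unfolding eq
    using vor_lmeasurable[OF assms] Hn by (intro measure_Diff_null_set) auto
qed



lemma box_meas: "(\<forall>i. (a::real^'n)$i \<le> b$i) \<Longrightarrow> measure lebesgue (box a b) = (\<Prod>i\<in>UNIV. b$i - a$i)"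
proof -
  assume "\<forall>i. (a::real^'n)$i \<le> b$i"
  have "measure lebesgue (box a b) = measure lborel (box a b)" by simp
  also have "\<dots> = (\<Prod>bb\<in>Basis. (b - a) \<bullet> bb)" using \<open>\<forall>i. a$i \<le> b$i\<close>
    by (subst measure_lborel_box_eq) (auto simp: Basis_vec_def cart_eq_inner_axis)
  also have "\<dots> = (\<Prod>i\<in>UNIV. b$i - a$i)"
    by (simp add: Basis_vec_def cart_eq_inner_axis axis_eq_axis prod.UNION_disjoint inner_diff_left)
  finally show ?thesis .
qed

lemma cbox_meas: "(\<forall>i. (a::real^'n)$i \<le> b$i) \<Longrightarrow> measure lebesgue (cbox a b) = (\<Prod>i\<in>UNIV. b$i - a$i)"
proof -
  assume "\<forall>i. (a::real^'n)$i \<le> b$i"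
  have "measure lebesgue (cbox a b) = measure lborel (cbox a b)" by simp
  also have "\<dots> = (\<Prod>bb\<in>Basis. (b - a) \<bullet> bb)" using \<open>\<forall>i. a$i \<le> b$i\<close>
    by (subst measure_lborel_cbox_eq) (auto simp: Basis_vec_def cart_eq_inner_axis)
  also have "\<dots> = (\<Prod>i\<in>UNIV. b$i - a$i)"
    by (simp add: Basis_vec_def cart_eq_inner_axis axis_eq_axis prod.UNION_disjoint inner_diff_left)
  finally show ?thesis .
qed

definition tpts :: "(real^'n) set \<Rightarrow> real^'n \<Rightarrow> real \<Rightarrow> (real^'n) set" where
  "tpts L c B = {x \<in> (+) c ` L. \<forall>i. 0 \<le> x$i \<and> x$i < B}"

lemma tpts_finite:
  assumes "full_rank_lattice (L :: (real^'n) set)"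
  shows "finite (tpts L c B)"
proof -
  have "tpts L c B \<subseteq> (+) c ` (L \<inter> cball 0 (norm c + real CARD('n) * \<bar>B\<bar>))"
  proof
    fix x assume x: "x \<in> tpts L c B"
    then obtain l where l: "l \<in> L" "x = c + l" unfolding tpts_def by auto
    have "norm x \<le> (\<Sum>i\<in>UNIV. \<bar>x$i\<bar>)" by (rule norm_le_l1_cart)
    also have "\<dots> \<le> (\<Sum>i\<in>(UNIV::'n set). \<bar>B\<bar>)"
    proof (intro sum_mono)
      fix i
      have "0 \<le> x$i \<and> x$i < B" using x unfolding tpts_def by auto
      then show "\<bar>x$i\<bar> \<le> \<bar>B\<bar>" using abs_ge_self[of B] by (simp add: abs_of_nonneg)
    qed
    finally have nx: "norm x \<le> real CARD('n) * \<bar>B\<bar>" by simp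
    have "norm l \<le> norm x + norm c" using l norm_triangle_sub[of l "-c"]
      by (simp add: algebra_simps)
    then have "l \<in> L \<inter> cball 0 (norm c + real CARD('n) * \<bar>B\<bar>)" using nx l by auto
    then show "x \<in> (+) c ` (L \<inter> cball 0 (norm c + real CARD('n) * \<bar>B\<bar>))" using l by auto
  qed
  then show ?thesis using frl_finite[OF assms] finite_subset by blast
qed

lemma lemA:
  assumes L: "full_rank_lattice (L :: (real^'n) set)" and B: "B > 2 * covering_radius L"
  shows "(B - 2 * covering_radius L) ^ CARD('n) \<le> real (card (tpts L c B)) * measure lebesgue (vor L)"
proof -
  let ?r = "covering_radius L"
  have r0: "?r \<ge> 0" using frl_cr(1)[OF L] .
  define Q where "Q = box ((\<chi> i. ?r)::real^'n) (\<chi> i. B - ?r)"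
  have mQ: "measure lebesgue Q = (B - 2 * ?r) ^ CARD('n)"
    unfolding Q_def using B by (subst box_meas) auto
  have sub: "Q \<subseteq> (\<Union>t\<in>tpts L c B. (+) t ` vor L)"
  proof
    fix x assume "x \<in> Q"
    then have xi: "?r < x$i \<and> x$i < B - ?r" for i unfolding Q_def mem_box_cart by auto
    obtain l0 where l0: "l0 \<in> L" "dist (x - c) l0 \<le> ?r" "\<forall>l\<in>L. dist (x - c) l0 \<le> dist (x - c) l"
      using frl_cr(2)[OF L] by blast
    define t where "t = c + l0"
    have xt: "x - t \<in> vor L" unfolding vor_def
    proof (intro CollectI ballI)
      fix l assume "l \<in> L"
      then have "l0 + l \<in> L" using frl_add[OF L l0(1)] by blast
      then have "dist (x - c) l0 \<le> dist (x - c) (l0 + l)" using l0(3) by blast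
      then show "norm (x - t) \<le> dist (x - t) l" by (simp add: dist_norm t_def algebra_simps)
    qed
    have nxt: "norm (x - t) \<le> ?r" using l0(2) by (simp add: dist_norm t_def algebra_simps)
    have "t \<in> tpts L c B" unfolding tpts_def
    proof (intro CollectI conjI allI)
      show "t \<in> (+) c ` L" using l0(1) t_def by blast
      fix i
      have "\<bar>(x - t)$i\<bar> \<le> ?r" using component_le_norm_cart[of "x - t" i] nxt by linarith
      then show "0 \<le> t$i" "t$i < B" using xi[of i] by auto
    qed
    moreover have "x \<in> (+) t ` vor L" using xt by (intro image_eqI[where x="x - t"]) auto
    ultimately show "x \<in> (\<Union>t\<in>tpts L c B. (+) t ` vor L)" by blast
  qed
  have tm: "(+) t ` vor L \<in> lmeasurable" for t
    using measurable_translation[OF vor_lmeasurable[OF L]] .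
  have "measure lebesgue Q \<le> measure lebesgue (\<Union>t\<in>tpts L c B. (+) t ` vor L)"
    using sub tm tpts_finite[OF L] unfolding Q_def
    by (intro measure_mono_fmeasurable) (auto intro!: fmeasurable.finite_UN)
  also have "\<dots> \<le> (\<Sum>t\<in>tpts L c B. measure lebesgue ((+) t ` vor L))"
    using tm tpts_finite[OF L] by (intro measure_UNION_le) auto
  also have "\<dots> = real (card (tpts L c B)) * measure lebesgue (vor L)"
    by (simp add: measure_translation)
  finally show ?thesis using mQ by simp
qed

lemma lemB:
  assumes L: "full_rank_lattice (L :: (real^'n) set)" and True: "B \<ge> 0"
  shows "real (card (tpts L c B)) * measure lebesgue (vor L) \<le> (B + 2 * covering_radius L) ^ CARD('n)"
proof -
  let ?r = "covering_radius L"
  have r0: "?r \<ge> 0" using frl_cr(1)[OF L] .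
  define Q where "Q = cbox ((\<chi> i. - ?r)::real^'n) (\<chi> i. B + ?r)"
  have mQ: "measure lebesgue Q = (B + 2 * ?r) ^ CARD('n)"
    unfolding Q_def using True r0 by (subst cbox_meas) (auto simp: ac_simps)
  have om: "ovor L \<in> lmeasurable" "measure lebesgue (ovor L) = measure lebesgue (vor L)"
    using ovor_props[OF L] by auto
  have tm: "(+) t ` ovor L \<in> lmeasurable" for t
    using measurable_translation[OF om(1)] .
  have sub: "(\<Union>t\<in>tpts L c B. (+) t ` ovor L) \<subseteq> Q"
  proof (clarify)
    fix t y assume t: "t \<in> tpts L c B" and y: "y \<in> ovor L"
    have "y \<in> vor L" using y unfolding ovor_def vor_def
    proof (intro CollectI ballI)
      fix l assume "l \<in> L" "y \<in> {x. \<forall>l\<in>L. l \<noteq> 0 \<longrightarrow> norm x < dist x l}"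
      then show "norm y \<le> dist y l" by (cases "l = 0") auto
    qed
    then have ny: "norm y \<le> ?r" using vor_bound[OF L] by blast
    show "t + y \<in> Q" unfolding Q_def mem_box_cart
    proof
      fix i
      have "\<bar>y$i\<bar> \<le> ?r" using component_le_norm_cart[of y i] ny by linarith
      then show "(\<chi> i. - ?r) $ i \<le> (t + y) $ i \<and> (t + y) $ i \<le> (\<chi> i. B + ?r) $ i"
      proof -
        have "0 \<le> t$i \<and> t$i < B" using t unfolding tpts_def by auto
        then show ?thesis using \<open>\<bar>y$i\<bar> \<le> ?r\<close> by (simp add: abs_le_iff)
      qed
    qed
  qed
  have disj: "disjoint_family_on (\<lambda>t. (+) t ` ovor L) (tpts L c B)"
    unfolding disjoint_family_on_def
  proof (intro ballI impI)
    fix t t' assume t: "t \<in> tpts L c B" and t': "t' \<in> tpts L c B" and ne: "t \<noteq> t'"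
    show "(+) t ` ovor L \<inter> (+) t' ` ovor L = {}"
    proof (rule ccontr)
      assume "(+) t ` ovor L \<inter> (+) t' ` ovor L \<noteq> {}"
      then obtain y y' where y: "y \<in> ovor L" and y': "y' \<in> ovor L" and eq: "t + y = t' + y'" by auto
      obtain l where l: "l \<in> L" "t = c + l" using t unfolding tpts_def by auto
      obtain l' where l': "l' \<in> L" "t' = c + l'" using t' unfolding tpts_def by auto
      have d1: "l' - l \<in> L" "l' - l \<noteq> 0" using frl_diff[OF L l'(1) l(1)] ne l l' by auto
      have d2: "l - l' \<in> L" "l - l' \<noteq> 0" using frl_diff[OF L l(1) l'(1)] ne l l' by auto
      have "norm y < dist y (l' - l)" using y d1 unfolding ovor_def by blast
      also have "dist y (l' - l) = norm y'"
        using eq l l' by (simp add: dist_norm algebra_simps)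
      finally have a: "norm y < norm y'" .
      have e2: "y' - (l - l') = y"
        using eq l l' by (simp add: algebra_simps)
      have "norm y' < dist y' (l - l')" using y' d2 unfolding ovor_def by blast
      also have "dist y' (l - l') = norm y" using e2 by (simp add: dist_norm)
      finally show False using a by simp
    qed
  qed
  have "real (card (tpts L c B)) * measure lebesgue (vor L) = (\<Sum>t\<in>tpts L c B. measure lebesgue ((+) t ` ovor L))"
    by (simp add: measure_translation om(2))
  also have "\<dots> = measure lebesgue (\<Union>t\<in>tpts L c B. (+) t ` ovor L)"
  proof (rule measure_finite_Union[symmetric, OF tpts_finite[OF L] _ disj])
    show "(\<lambda>t. (+) t ` ovor L) ` tpts L c B \<subseteq> sets lebesgue"
      unfolding image_subset_iff using fmeasurableD[OF tm] by simp
    show "emeasure lebesgue ((+) t ` ovor L) \<noteq> \<infinity>" for t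
      using fmeasurableD2[OF tm] by simp
  qed
  also have "\<dots> \<le> measure lebesgue Q"
    using sub tm tpts_finite[OF L] unfolding Q_def
    by (intro measure_mono_fmeasurable) (auto intro!: fmeasurable.finite_UN)
  finally show ?thesis using mQ by simp
qed



lemma bp_tpts: "box_points L B = tpts L 0 B"
  unfolding box_points_def tpts_def by simp

lemma bpC:
  assumes L: "full_rank_lattice (L :: (real^'n) set)" and L1: "L1 \<subseteq> L" and l: "l \<in> L"
  shows "box_points L B \<inter> (+) l ` L1 = tpts L1 l B"
  unfolding box_points_def tpts_def using frl_add[OF L l] L1 by auto

lemma coset_eq:
  assumes L1: "full_rank_lattice (L1 :: (real^'n) set)"
    and x: "x \<in> (+) l ` L1" "x \<in> (+) l' ` L1"
  shows "(+) l ` L1 = (+) l' ` L1"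
proof -
  have sub: "(+) l ` L1 \<subseteq> (+) l' ` L1" if h: "x \<in> (+) l ` L1" "x \<in> (+) l' ` L1" for l l'
  proof
    obtain a where a: "a \<in> L1" "x = l + a" using h(1) by auto
    obtain a' where a': "a' \<in> L1" "x = l' + a'" using h(2) by auto
    fix y assume "y \<in> (+) l ` L1"
    then obtain b where b: "b \<in> L1" "y = l + b" by auto
    have "a' - a + b \<in> L1" using frl_add[OF L1 frl_diff[OF L1 a'(1) a(1)] b(1)] .
    moreover have "y = l' + (a' - a + b)" using a a' b by (simp add: algebra_simps)
    ultimately show "y \<in> (+) l' ` L1" by blast
  qed
  show ?thesis using sub[OF x] sub[OF x(2,1)] by blast
qed

lemma self_coset:
  assumes L1: "full_rank_lattice (L1 :: (real^'n) set)"
  shows "x \<in> (+) x ` L1"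
  using frl_zero[OF L1] by (intro image_eqI[where x=0]) auto

lemma lim_ratio: "(\<lambda>m::nat. ((real m - a) / (real m + b))) \<longlonglongrightarrow> 1"
  by real_asymp

theorem lemma2p5:
  fixes L L1 :: "(real^'n) set" and B1 :: real
  assumes "full_rank_lattice L"
    and "full_rank_lattice L1"
    and "L1 \<subseteq> L"
    and "B1 > 2 * covering_radius L1"
  shows "coset_tv L L1 B1 \<le>
           1 - (B1 - 2 * covering_radius L1) ^ CARD('n) / (B1 + 2 * covering_radius L) ^ CARD('n)"
proof -
  note L = assms(1) and L1 = assms(2) and sub = assms(3) and B1 = assms(4)
  define r where "r = covering_radius L"
  define r1 where "r1 = covering_radius L1"
  define n where "n = CARD('n)"
  define cos where "cos = lattice_cosets L L1"
  define V where "V = measure lebesgue (vor L)"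
  define V1 where "V1 = measure lebesgue (vor L1)"
  have r0: "r \<ge> 0" using frl_cr(1)[OF L] by (simp add: r_def)
  have r10: "r1 \<ge> 0" using frl_cr(1)[OF L1] by (simp add: r1_def)
  have V0: "V \<ge> 0" "V1 \<ge> 0" by (simp_all add: V_def V1_def)
  have cosE: "\<exists>l\<in>L. C = (+) l ` L1" if "C \<in> cos" for C
    using that unfolding cos_def lattice_cosets_def by auto
  have cosI: "(+) l ` L1 \<in> cos" if "l \<in> L" for l
    using that unfolding cos_def lattice_cosets_def by auto
  have lowC: "(B - 2 * r1) ^ n \<le> real (card (box_points L B \<inter> C)) * V1"
    if h: "B > 2 * r1" "C \<in> cos" for B C
  proof -
    obtain l where l: "l \<in> L" "C = (+) l ` L1" using cosE[OF h(2)] by blast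
    show ?thesis using lemA[OF L1, of B l] h(1) bpC[OF L sub l(1)] l(2)
      by (simp add: r1_def n_def V1_def)
  qed
  have upC: "real (card (box_points L B \<inter> C)) * V1 \<le> (B + 2 * r1) ^ n"
    if h: "B \<ge> 0" "C \<in> cos" for B C
  proof -
    obtain l where l: "l \<in> L" "C = (+) l ` L1" using cosE[OF h(2)] by blast
    show ?thesis using lemB[OF L1, of B l] h(1) bpC[OF L sub l(1)] l(2)
      by (simp add: r1_def n_def V1_def)
  qed
  have bpfin: "finite (box_points L B)" for B
    unfolding bp_tpts using tpts_finite[OF L] .
  have meets: "box_points L B \<inter> C \<noteq> {}" if "B > 2 * r1" "C \<in> cos" for B C
  proof
    assume "box_points L B \<inter> C = {}"
    then have "(B - 2 * r1) ^ n \<le> 0" using lowC[OF that] by simp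
    moreover have "(B - 2 * r1) ^ n > 0" using that(1) by simp
    ultimately show False by simp
  qed
  have B1': "B1 > 2 * r1" using B1 by (simp add: r1_def)
  have fincos: "finite cos"
  proof -
    have "cos \<subseteq> (\<lambda>x. (+) x ` L1) ` box_points L B1"
    proof
      fix C assume C: "C \<in> cos"
      obtain l where l: "l \<in> L" "C = (+) l ` L1" using cosE[OF C] by blast
      obtain x where x: "x \<in> box_points L B1" "x \<in> C" using meets[OF B1' C] by blast
      have "C = (+) x ` L1" using coset_eq[OF L1, of x l x] x(2) l(2) self_coset[OF L1] by blast
      then show "C \<in> (\<lambda>x. (+) x ` L1) ` box_points L B1" using x(1) by blast
    qed
    then show ?thesis using bpfin finite_subset by blast
  qed
  have cardsum: "card (box_points L B) = (\<Sum>C\<in>cos. card (box_points L B \<inter> C))" for B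
  proof -
    have eq: "box_points L B = (\<Union>C\<in>cos. box_points L B \<inter> C)"
    proof (intro set_eqI iffI)
      fix x assume x: "x \<in> box_points L B"
      then have "x \<in> L" unfolding box_points_def by auto
      then show "x \<in> (\<Union>C\<in>cos. box_points L B \<inter> C)"
        using x cosI self_coset[OF L1, of x] by blast
    qed auto
    have "card (\<Union>C\<in>cos. box_points L B \<inter> C) = (\<Sum>C\<in>cos. card (box_points L B \<inter> C))"
    proof (rule card_UN_disjoint[OF fincos])
      show "\<forall>C\<in>cos. finite (box_points L B \<inter> C)" using bpfin by blast
      show "\<forall>C\<in>cos. \<forall>C'\<in>cos. C \<noteq> C' \<longrightarrow> (box_points L B \<inter> C) \<inter> (box_points L B \<inter> C') = {}"
      proof (intro ballI impI)
        fix C C' assume C: "C \<in> cos" and C': "C' \<in> cos" and ne: "C \<noteq> C'"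
        obtain l where l: "l \<in> L" "C = (+) l ` L1" using cosE[OF C] by blast
        obtain l' where l': "l' \<in> L" "C' = (+) l' ` L1" using cosE[OF C'] by blast
        show "(box_points L B \<inter> C) \<inter> (box_points L B \<inter> C') = {}"
          using coset_eq[OF L1, of _ l l'] l l' ne by blast
      qed
    qed
    then show ?thesis using eq by simp
  qed
  have L0: "0 \<in> L" using frl_zero[OF L] .
  have cosne: "cos \<noteq> {}" using cosI[OF L0] by blast
  have kpos: "card cos > 0" using fincos cosne by (simp add: card_gt_0_iff)
  have V1pos: "V1 > 0"
  proof -
    obtain C where C: "C \<in> cos" using cosne by blast
    have "0 < (B1 - 2 * r1) ^ n" using B1' by simp
    also have "\<dots> \<le> real (card (box_points L B1 \<inter> C)) * V1" using lowC[OF B1' C] .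
    finally show ?thesis using V0(2) by (simp add: zero_less_mult_iff)
  qed
  have Vpos: "V > 0"
  proof -
    have "0 < ((2 * r + 1) - 2 * r) ^ n" by simp
    also have "\<dots> \<le> real (card (tpts L 0 (2 * r + 1))) * V"
      using lemA[OF L, of "2 * r + 1" 0] by (simp add: r_def V_def n_def)
    finally show ?thesis using V0(1) by (simp add: zero_less_mult_iff)
  qed
  have key: "V1 \<le> real (card cos) * V"
  proof -
    have ev: "V1 * ((real m - 2 * r) / (real m + 2 * r1)) ^ n \<le> real (card cos) * V"
      if m: "real m > 2 * r + 2 * r1 + 1" for m :: nat
    proof -
      let ?B = "real m"
      have Bp: "?B > 2 * r" "?B \<ge> 0" "?B + 2 * r1 > 0" using m r0 r10 by auto
      have "(?B - 2 * r) ^ n \<le> real (card (box_points L ?B)) * V"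
        using lemA[OF L, of ?B 0] Bp(1) by (simp add: bp_tpts r_def V_def n_def)
      also have "real (card (box_points L ?B)) = (\<Sum>C\<in>cos. real (card (box_points L ?B \<inter> C)))"
        using cardsum[of ?B] by simp
      also have "\<dots> \<le> (\<Sum>C\<in>cos. (?B + 2 * r1) ^ n / V1)"
        using upC[OF Bp(2)] V1pos by (intro sum_mono) (simp add: field_simps)
      also have "\<dots> = real (card cos) * ((?B + 2 * r1) ^ n / V1)" by simp
      finally have "(?B - 2 * r) ^ n \<le> real (card cos) * ((?B + 2 * r1) ^ n / V1) * V" using Vpos by simp
      then have "V1 * (?B - 2 * r) ^ n \<le> real (card cos) * V * (?B + 2 * r1) ^ n"
        using V1pos by (simp add: field_simps)
      then show ?thesis using Bp(3) V1pos by (simp add: power_divide field_simps)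
    qed
    have lim: "(\<lambda>m::nat. V1 * ((real m - 2 * r) / (real m + 2 * r1)) ^ n) \<longlonglongrightarrow> V1 * 1 ^ n"
      by (intro tendsto_intros lim_ratio)
    show ?thesis
    proof (rule LIMSEQ_le_const2[OF lim[simplified]])
      obtain N :: nat where N: "real N > 2 * r + 2 * r1 + 1" using reals_Archimedean2 by blast
      show "\<exists>N. \<forall>m\<ge>N. V1 * ((real m - 2 * r) / (real m + 2 * r1)) ^ n \<le> real (card cos) * V"
        using N by (intro exI[of _ N] allI impI ev) auto
    qed
  qed
  define N where "N = card (box_points L B1)"
  define k where "k = card cos"
  define s where "s = B1 - 2 * r1"
  define T where "T = B1 + 2 * r"
  have s0: "s > 0" using B1' by (simp add: s_def)
  have sT: "s \<le> T" using r0 r10 by (simp add: s_def T_def)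
  have NV: "real N * V \<le> T ^ n"
    using lemB[OF L, of B1 0] B1' r10 by (simp add: N_def bp_tpts T_def r_def V_def n_def)
  have Nsum: "real N = (\<Sum>C\<in>cos. real (card (box_points L B1 \<inter> C)))"
    using cardsum[of B1] by (simp add: N_def)
  have mlow: "s ^ n / V1 \<le> real (card (box_points L B1 \<inter> C))" if "C \<in> cos" for C
    using lowC[OF B1' that] V1pos by (simp add: s_def field_simps)
  have Npos: "real N > 0"
  proof -
    obtain C where C: "C \<in> cos" using cosne by blast
    have "0 < s ^ n / V1" using s0 V1pos by simp
    also have "\<dots> \<le> real (card (box_points L B1 \<inter> C))" using mlow[OF C] .
    also have "\<dots> \<le> real N" unfolding N_def using bpfin by (simp add: card_mono)
    finally show ?thesis .
  qed
  define A where "A = s ^ n / (V1 * real N)"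
  define a where "a C = real (card (box_points L B1 \<inter> C)) / real N" for C
  have aA: "A \<le> a C" if "C \<in> cos" for C
    using mlow[OF that] Npos V1pos unfolding A_def a_def by (simp add: field_simps)
  have asum: "(\<Sum>C\<in>cos. a C) = 1"
    unfolding a_def using Nsum Npos by (simp add: sum_divide_distrib[symmetric])
  have kp: "real k > 0" using kpos by (simp add: k_def)
  have kA_le: "real k * A \<le> 1"
  proof -
    have "real k * A = (\<Sum>C\<in>cos. A)" by (simp add: k_def)
    also have "\<dots> \<le> (\<Sum>C\<in>cos. a C)" using aA by (intro sum_mono) auto
    finally show ?thesis using asum by simp
  qed
  have tv: "coset_tv L L1 B1 = (1/2) * (\<Sum>C\<in>cos. \<bar>a C - 1 / real k\<bar>)"
    unfolding coset_tv_def a_def N_def k_def cos_def by simp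
  have "(\<Sum>C\<in>cos. \<bar>a C - 1 / real k\<bar>) = (\<Sum>C\<in>cos. (a C - 1 / real k) + 2 * max (1 / real k - a C) 0)"
    by (intro sum.cong) (auto simp: max_def)
  also have "\<dots> = (\<Sum>C\<in>cos. a C) - real k * (1 / real k) + 2 * (\<Sum>C\<in>cos. max (1 / real k - a C) 0)"
    by (simp add: sum.distrib sum_subtractf sum_distrib_left k_def)
  also have "\<dots> = 2 * (\<Sum>C\<in>cos. max (1 / real k - a C) 0)" using asum kp by simp
  also have "\<dots> \<le> 2 * (\<Sum>C\<in>cos. (1 / real k - A))"
  proof -
    have "max (1 / real k - a C) 0 \<le> 1 / real k - A" if "C \<in> cos" for C
    proof -
      have "A \<le> 1 / real k" using kA_le kp by (simp add: field_simps)
      then show ?thesis using aA[OF that] by simp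
    qed
    then show ?thesis by (intro mult_left_mono sum_mono) auto
  qed
  also have "\<dots> = 2 * (1 - real k * A)" using kp by (simp add: k_def[symmetric] field_simps)
  finally have tvb: "coset_tv L L1 B1 \<le> 1 - real k * A" using tv by simp
  have "s ^ n / T ^ n \<le> real k * A"
  proof -
    have Tp: "T ^ n > 0" using sT s0 by simp
    have "s ^ n / T ^ n \<le> s ^ n / (real N * V)"
      using NV Npos Vpos s0 Tp by (intro divide_left_mono) auto
    also have "\<dots> = real k * s ^ n / (real N * (real k * V))" using kp by simp
    also have "\<dots> \<le> real k * s ^ n / (real N * V1)"
      using key Npos V1pos kp s0 by (intro divide_left_mono) (auto simp: k_def)
    also have "\<dots> = real k * A" unfolding A_def by (simp add: mult.commute)
    finally show ?thesis .
  qed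
  then show ?thesis using tvb by (simp add: s_def T_def r_def r1_def n_def)
qed


end
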